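(* Let $G$ be a chordal graph, $X\subsetneq V(G)$ a clique, and $L_1,\dots,L_t$ the evaporation sequence of $G$ with exception set $X$. If $G\setminus X$ is connected and $X\subseteq N(L_t)$, then $X\cup L_t$ is a clique.
   Context: A vertex is simplicial if its neighborhood is a clique. For a chordal graph $G$ and a clique $X\subseteq V(G)$ (possibly empty), the evaporation sequence of $G$ with exception set $X$ is defined recursively: if $X=V(G)$ it is the empty sequence; otherwise let $L_1$ be the set of simplicial vertices of $G$ that are not in $X$ (this set is always nonempty), and the evaporation sequence is $L_1$ followed by the evaporation sequence of $G-L_1$ with exception set $X$. For $S\subseteq V(G)$, $N(S)$ denotes the set of vertices not in $S$ that are adjacent to some vertex of $S$. *)

theory Defs
  imports Main
begin

definition sgraph :: "'a set \<Rightarrow> ('a \<Rightarrow> 'a \<Rightarrow> bool) \<Rightarrow> bool" where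
  "sgraph V E \<longleftrightarrow> finite V \<and> (\<forall>x y. E x y \<longrightarrow> E y x) \<and> (\<forall>x. \<not> E x x)
     \<and> (\<forall>x y. E x y \<longrightarrow> x \<in> V \<and> y \<in> V)"

definition clique :: "'a set \<Rightarrow> ('a \<Rightarrow> 'a \<Rightarrow> bool) \<Rightarrow> 'a set \<Rightarrow> bool" where
  "clique V E C \<longleftrightarrow> C \<subseteq> V \<and> (\<forall>x\<in>C. \<forall>y\<in>C. x \<noteq> y \<longrightarrow> E x y)"

definition simplicial :: "'a set \<Rightarrow> ('a \<Rightarrow> 'a \<Rightarrow> bool) \<Rightarrow> 'a \<Rightarrow> bool" where
  "simplicial V E v \<longleftrightarrow> v \<in> V \<and> clique V E {u \<in> V. E v u}"

definition chordless_cycle :: "'a set \<Rightarrow> ('a \<Rightarrow> 'a \<Rightarrow> bool) \<Rightarrow> 'a list \<Rightarrow> bool" where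
  "chordless_cycle V E vs \<longleftrightarrow> length vs \<ge> 4 \<and> distinct vs \<and> set vs \<subseteq> V \<and>
     (\<forall>i < length vs. \<forall>j < length vs.
        E (vs ! i) (vs ! j) \<longleftrightarrow> (j = Suc i mod length vs \<or> i = Suc j mod length vs))"

definition chordal :: "'a set \<Rightarrow> ('a \<Rightarrow> 'a \<Rightarrow> bool) \<Rightarrow> bool" where
  "chordal V E \<longleftrightarrow> (\<nexists>vs. chordless_cycle V E vs)"

inductive evap :: "'a set \<Rightarrow> ('a \<Rightarrow> 'a \<Rightarrow> bool) \<Rightarrow> 'a set \<Rightarrow> 'a set list \<Rightarrow> bool" where
  evap_Nil: "X = V \<Longrightarrow> evap V E X []"
| evap_Cons: "X \<noteq> V \<Longrightarrow> L = {v \<in> V - X. simplicial V E v} \<Longrightarrow> evap (V - L) E X Ls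
     \<Longrightarrow> evap V E X (L # Ls)"

definition nbhd :: "'a set \<Rightarrow> ('a \<Rightarrow> 'a \<Rightarrow> bool) \<Rightarrow> 'a set \<Rightarrow> 'a set" where
  "nbhd V E S = {v \<in> V - S. \<exists>u\<in>S. E u v}"

definition connected_on :: "'a set \<Rightarrow> ('a \<Rightarrow> 'a \<Rightarrow> bool) \<Rightarrow> bool" where
  "connected_on S E \<longleftrightarrow> S \<noteq> {} \<and>
     (\<forall>x\<in>S. \<forall>y\<in>S. (x, y) \<in> {(a, b). a \<in> S \<and> b \<in> S \<and> E a b}\<^sup>*)"

end

theory Submission
  imports Defs
begin

lemma evap_shrink_conn:
  assumes sym: "\<And>x y. E x y \<Longrightarrow> E y x"
    and Ldef: "L = {v \<in> V - X. simplicial V E v}"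
    and conn: "connected_on (V - X) E"
    and ne: "V - L - X \<noteq> {}"
  shows "connected_on (V - L - X) E"
proof -
  let ?W = "V - L - X"
  let ?R = "{(a, b). a \<in> V - X \<and> b \<in> V - X \<and> E a b}"
  let ?RW = "{(a, b). a \<in> ?W \<and> b \<in> ?W \<and> E a b}"
  have main: "(b \<in> ?W \<and> (a, b) \<in> ?RW\<^sup>*) \<or> (b \<in> L \<and> (\<exists>c\<in>?W. (a, c) \<in> ?RW\<^sup>* \<and> E c b))"
    if "a \<in> ?W" "(a, b) \<in> ?R\<^sup>*" for a b
    using that(2)
  proof (induction rule: rtrancl_induct)
    case base
    then show ?case using that(1) by auto
  next
    case (step b b')
    have b'V: "b' \<in> V - X" and bb': "E b b'" and bV: "b \<in> V - X" using step.hyps(2) by auto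
    from step.IH show ?case
    proof
      assume h: "b \<in> ?W \<and> (a, b) \<in> ?RW\<^sup>*"
      show ?thesis
      proof (cases "b' \<in> L")
        case True
        then show ?thesis using h bb' by blast
      next
        case False
        then have "b' \<in> ?W" using b'V by auto
        then have "(b, b') \<in> ?RW" using h bb' by auto
        then show ?thesis using h \<open>b' \<in> ?W\<close> by (meson rtrancl.rtrancl_into_rtrancl)
      qed
    next
      assume h: "b \<in> L \<and> (\<exists>c\<in>?W. (a, c) \<in> ?RW\<^sup>* \<and> E c b)"
      then obtain c where c: "c \<in> ?W" "(a, c) \<in> ?RW\<^sup>*" "E c b" by blast
      have simp: "simplicial V E b" using h Ldef by auto
      have cn: "c \<in> {u \<in> V. E b u}" using c sym by auto
      have bn: "b' \<in> {u \<in> V. E b u}" using b'V bb' by auto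
      have cb': "c = b' \<or> E c b'" using simp cn bn unfolding simplicial_def clique_def by blast
      show ?thesis
      proof (cases "b' \<in> L")
        case True
        then have "c \<noteq> b'" using c by auto
        then show ?thesis using cb' True c by blast
      next
        case False
        then have bW: "b' \<in> ?W" using b'V by auto
        show ?thesis
        proof (cases "c = b'")
          case True then show ?thesis using c by auto
        next
          case False
          then have "(c, b') \<in> ?RW" using cb' c bW by auto
          then show ?thesis using c bW by (meson rtrancl.rtrancl_into_rtrancl)
        qed
      qed
    qed
  qed
  show ?thesis unfolding connected_on_def
  proof (intro conjI ballI)
    show "?W \<noteq> {}" by fact
  next
    fix x y assume xy: "x \<in> ?W" "y \<in> ?W"
    then have "(x, y) \<in> ?R\<^sup>*" using conn unfolding connected_on_def by auto
    then show "(x, y) \<in> ?RW\<^sup>*" using main[OF xy(1)] xy(2) by auto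
  qed
qed

lemma evap_last:
  assumes "evap V E X Ls"
  shows "(\<And>x y. E x y \<Longrightarrow> E y x) \<Longrightarrow> Ls \<noteq> [] \<Longrightarrow> connected_on (V - X) E \<Longrightarrow> X \<subseteq> V \<Longrightarrow>
    connected_on (last Ls) E \<and> (\<forall>v \<in> last Ls. simplicial (X \<union> last Ls) E v)
    \<and> X \<inter> last Ls = {} \<and> last Ls \<subseteq> V"
  using assms
proof (induction rule: evap.induct)
  case (evap_Nil X V E)
  then show ?case by simp
next
  case (evap_Cons X V L E Ls)
  show ?case
  proof (cases "Ls = []")
    case True
    then have "X = V - L" using evap_Cons.hyps(3) by (auto elim: evap.cases)
    then have LV: "L = V - X" using evap_Cons.hyps(2) by auto
    have "X \<union> L = V" using LV evap_Cons.prems(4) by auto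
    then show ?thesis using True LV evap_Cons.prems(3) evap_Cons.hyps(2) by auto
  next
    case False
    have "X \<noteq> V - L" using evap_Cons.hyps(3) False by (auto elim: evap.cases)
    moreover have XVL: "X \<subseteq> V - L" using evap_Cons.hyps(2) evap_Cons.prems(4) by auto
    ultimately have ne: "V - L - X \<noteq> {}" by auto
    have "connected_on (V - L - X) E"
      using evap_shrink_conn[OF evap_Cons.prems(1) evap_Cons.hyps(2) evap_Cons.prems(3) ne] .
    from evap_Cons.IH[OF evap_Cons.prems(1) False this XVL] False show ?thesis by auto
  qed
qed

theorem mainTheorem6:
  fixes V :: "'a set" and E :: "'a \<Rightarrow> 'a \<Rightarrow> bool" and X :: "'a set" and Ls :: "'a set list"
  assumes "sgraph V E" and "chordal V E"
    and "clique V E X" and "X \<subset> V"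
    and "evap V E X Ls"
    and "connected_on (V - X) E"
    and "X \<subseteq> nbhd V E (last Ls)"
  shows "clique V E (X \<union> last Ls)"
proof -
  have sym: "\<And>x y. E x y \<Longrightarrow> E y x" using assms(1) unfolding sgraph_def by blast
  have ne: "Ls \<noteq> []" using assms(4,5) by (auto elim: evap.cases)
  define L where "L = last Ls"
  have props: "connected_on L E" "\<forall>v \<in> L. simplicial (X \<union> L) E v" "X \<inter> L = {}" "L \<subseteq> V"
    using evap_last[OF assms(5) sym ne assms(6)] assms(4) unfolding L_def by auto
  have nb: "\<And>v a b. v \<in> L \<Longrightarrow> a \<in> X \<union> L \<Longrightarrow> b \<in> X \<union> L \<Longrightarrow> E v a \<Longrightarrow> E v b \<Longrightarrow> a \<noteq> b \<Longrightarrow> E a b"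
  proof -
    fix v a b assume h: "v \<in> L" "a \<in> X \<union> L" "b \<in> X \<union> L" "E v a" "E v b" "a \<noteq> b"
    have "simplicial (X \<union> L) E v" using props(2) h(1) by auto
    then show "E a b" using h unfolding simplicial_def clique_def by blast
  qed
  have Lcl: "E u w" if u: "u \<in> L" and w: "w \<in> L" and uw: "u \<noteq> w" for u w
  proof -
    let ?R = "{(a, b). a \<in> L \<and> b \<in> L \<and> E a b}"
    have "(u, w) \<in> ?R\<^sup>*" using props(1) u w unfolding connected_on_def by auto
    then have "w = u \<or> E u w"
    proof (induction rule: rtrancl_induct)
      case base then show ?case by simp
    next
      case (step b b')
      from step.IH show ?case
      proof
        assume "b = u" then show ?thesis using step.hyps(2) by auto
      next
        assume ub: "E u b"
        show ?thesis
        proof (cases "u = b'")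
          case True then show ?thesis by simp
        next
          case False
          then show ?thesis using nb[of b u b'] ub sym step.hyps(2) u by auto
        qed
      qed
    qed
    then show ?thesis using uw by auto
  qed
  have XL: "E x v" if x: "x \<in> X" and v: "v \<in> L" for x v
  proof -
    obtain u where u: "u \<in> L" "E u x" using assms(7) x unfolding nbhd_def L_def[symmetric] by auto
    show ?thesis
    proof (cases "u = v")
      case True then show ?thesis using u sym by auto
    next
      case False
      then have "E u v" using Lcl u v by auto
      moreover have "x \<noteq> v" using props(3) x v by auto
      ultimately have "E v x" using nb[of u v x] u x v by auto
      then show ?thesis using sym by auto
    qed
  qed
  show ?thesis unfolding L_def[symmetric] clique_def
  proof (intro conjI ballI impI)
    show "X \<union> L \<subseteq> V" using props(4) assms(3) unfolding clique_def by auto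
  next
    fix a b assume "a \<in> X \<union> L" "b \<in> X \<union> L" "a \<noteq> b"
    then show "E a b" using assms(3) Lcl XL sym unfolding clique_def by blast
  qed
qed

end
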